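(* Let $\mathcal G$ be the complete graph on $N\ge2$ nodes with all edge weights equal to $b>0$, and fix $\alpha,m,\tau,k>0$. Then the function $$J(\gamma)=\frac{\alpha}{2m}(N-1)\frac{1}{1+\dfrac{\gamma\tau Nb+k}{\gamma Nb(\gamma\tau Nb+k)+k^2mNb}},\qquad\gamma\ge0,$$ (the squared $\mathcal H_2$ norm of $H_{\mathrm{DAPI}}$ for this graph) is minimized over $[0,\infty)$ at $$\gamma^*=\frac{k}{Nb\tau}\big(\sqrt{Nbm\tau}-1\big)\quad\text{if } Nbm\tau>1,$$ and at $\gamma^*=0$ otherwise.
   Context: $H_{\mathrm{DAPI}}$ is the system $\dot\theta=\omega$, $\dot\omega=-\tfrac m\tau L_B\theta-\tfrac1\tau\omega+\tfrac1\tau\Omega+\tfrac1\tau w$, $\dot\Omega=-\tfrac1k\omega-\tfrac1k\gamma L_B\Omega$, output $y=(\alpha L_B)^{1/2}\theta$, where $L_B$ is the Laplacian of the complete graph with uniform edge weight $b$ (whose nonzero eigenvalues all equal $Nb$). $\|H\|_2^2:=\int_0^\infty\operatorname{tr}(Ce^{At}BB^Te^{A^Tt}C^T)\,dt$. *)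

theory Defs
  imports Complex_Main
begin

definition J_DAPI :: "nat \<Rightarrow> real \<Rightarrow> real \<Rightarrow> real \<Rightarrow> real \<Rightarrow> real \<Rightarrow> real \<Rightarrow> real" where
  "J_DAPI N b \<alpha> m \<tau> k \<gamma> =
     \<alpha> / (2 * m) * (real N - 1) *
     (1 / (1 + (\<gamma> * \<tau> * real N * b + k) /
               (\<gamma> * real N * b * (\<gamma> * \<tau> * real N * b + k) + k^2 * m * real N * b)))"

definition gamma_opt :: "nat \<Rightarrow> real \<Rightarrow> real \<Rightarrow> real \<Rightarrow> real \<Rightarrow> real" where
  "gamma_opt N b m \<tau> k =
     (if real N * b * m * \<tau> > 1
      then k / (real N * b * \<tau>) * (sqrt (real N * b * m * \<tau>) - 1)
      else 0)"

end

theory Submission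
  imports Defs
begin

lemma key:
  fixes c m \<tau> k g g0 :: real
  assumes c: "c > 0" and m: "m > 0" and t: "\<tau> > 0" and k: "k > 0" and g: "g \<ge> 0"
    and g0: "g0 = (if c * m * \<tau> > 1 then k / (c * \<tau>) * (sqrt (c * m * \<tau>) - 1) else 0)"
  shows "g0 \<ge> 0 \<and> (g * \<tau> * c + k) / (g * c * (g * \<tau> * c + k) + k^2 * m * c)
        \<le> (g0 * \<tau> * c + k) / (g0 * c * (g0 * \<tau> * c + k) + k^2 * m * c)"
proof -
  define s where "s = sqrt (c * m * \<tau>)"
  have s0: "s > 0" using c m t by (simp add: s_def)
  have ss: "s^2 = c*m*\<tau>" using c m t by (simp add: s_def)
  define u where "u = g * \<tau> * c + k"
  define u0 where "u0 = g0 * \<tau> * c + k"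
  have gu: "g * c = (u - k)/\<tau>" using t by (simp add: u_def field_simps)
  have g0u: "g0 * c = (u0 - k)/\<tau>" using t by (simp add: u0_def field_simps)
  have uk: "u \<ge> k" using g c t by (simp add: u_def)
  have g0pos: "g0 \<ge> 0"
  proof (cases "c*m*\<tau> > 1")
    case True
    then have "s > 1" using ss s0 by (simp add: s_def)
    then show ?thesis using True g0 c t k by (simp add: s_def[symmetric])
  qed (simp add: g0)
  have u0k: "u0 \<ge> k" using g0pos c t by (simp add: u0_def)
  have D: "g * c * u + k^2*m*c = (u*(u-k) + k^2*s^2)/\<tau>"
  proof -
    have a: "\<tau>*(g*c) = u-k" by (simp add: u_def algebra_simps)
    have b: "\<tau>*(m*c) = s^2" using ss by (simp add: algebra_simps)
    have "\<tau>*(g * c * u + k^2*m*c) = (\<tau>*(g*c))*u + k^2*(\<tau>*(m*c))" by (simp add: algebra_simps)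
    also have "\<dots> = u*(u-k) + k^2*s^2" using a b by (metis mult.commute)
    finally have e: "\<tau>*(g * c * u + k^2*m*c) = u*(u-k) + k^2*s^2" .
    show ?thesis using t e by (simp add: eq_divide_eq mult.commute)
  qed
  have D0: "g0 * c * u0 + k^2*m*c = (u0*(u0-k) + k^2*s^2)/\<tau>"
  proof -
    have a: "\<tau>*(g0*c) = u0-k" by (simp add: u0_def algebra_simps)
    have b: "\<tau>*(m*c) = s^2" using ss by (simp add: algebra_simps)
    have "\<tau>*(g0 * c * u0 + k^2*m*c) = (\<tau>*(g0*c))*u0 + k^2*(\<tau>*(m*c))" by (simp add: algebra_simps)
    also have "\<dots> = u0*(u0-k) + k^2*s^2" using a b by (metis mult.commute)
    finally have e: "\<tau>*(g0 * c * u0 + k^2*m*c) = u0*(u0-k) + k^2*s^2" .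
    show ?thesis using t e by (simp add: eq_divide_eq mult.commute)
  qed
  have Dp: "u*(u-k) + k^2*s^2 > 0" using uk k s0 by (smt (verit) mult_nonneg_nonneg zero_less_power mult_pos_pos)
  have D0p: "u0*(u0-k) + k^2*s^2 > 0" using u0k k s0 by (smt (verit) mult_nonneg_nonneg zero_less_power mult_pos_pos)
  have ineq: "u * (u0*(u0-k) + k^2*s^2) \<le> u0 * (u*(u-k) + k^2*s^2)"
  proof (cases "c*m*\<tau> > 1")
    case True
    have "u0 = k * s" using g0 True t c by (simp add: u0_def s_def field_simps)
    then have "u0 * (u*(u-k) + k^2*s^2) - u * (u0*(u0-k) + k^2*s^2) = k*s*(u - k*s)^2"
      by (simp add: power2_eq_square algebra_simps)
    moreover have "k*s*(u - k*s)^2 \<ge> 0" using k s0 by simp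
    ultimately show ?thesis by linarith
  next
    case False
    have "u0 = k" using g0 False by (simp add: u0_def)
    moreover have "s^2 \<le> 1" using False ss by simp
    ultimately have e: "u0 * (u*(u-k) + k^2*s^2) - u * (u0*(u0-k) + k^2*s^2) = k*(u-k)*(u - k*s^2)"
      by (simp add: power2_eq_square algebra_simps)
    have "k*s^2 \<le> k" using \<open>s^2 \<le> 1\<close> k by simp
    hence h: "u - k*s^2 \<ge> 0" using uk by linarith
    have "k*(u-k)*(u - k*s^2) \<ge> 0" using uk k h by (intro mult_nonneg_nonneg) auto
    with e show ?thesis by linarith
  qed
  have "u / ((u*(u-k) + k^2*s^2)/\<tau>) \<le> u0 / ((u0*(u0-k) + k^2*s^2)/\<tau>)"
    using Dp D0p t ineq by (simp add: divide_simps mult.commute mult.left_commute)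
  then show ?thesis using g0pos D D0 by (simp add: u_def u0_def)
qed

theorem corollary2:
  fixes N :: nat and b \<alpha> m \<tau> k :: real
  assumes "N \<ge> 2" and "b > 0" and "\<alpha> > 0" and "m > 0" and "\<tau> > 0" and "k > 0"
  shows "gamma_opt N b m \<tau> k \<ge> 0 \<and>
         (\<forall>\<gamma>::real. \<gamma> \<ge> 0 \<longrightarrow>
            J_DAPI N b \<alpha> m \<tau> k (gamma_opt N b m \<tau> k) \<le> J_DAPI N b \<alpha> m \<tau> k \<gamma>)"
proof -
  define c where "c = real N * b"
  have c: "c > 0" using assms by (simp add: c_def)
  define g0 where "g0 = gamma_opt N b m \<tau> k"
  have g0d: "g0 = (if c * m * \<tau> > 1 then k / (c * \<tau>) * (sqrt (c * m * \<tau>) - 1) else 0)"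
    by (simp add: g0_def gamma_opt_def c_def mult.assoc)
  have A: "\<alpha> / (2 * m) * (real N - 1) > 0" using assms by simp
  define R where "R g = (g * \<tau> * c + k) / (g * c * (g * \<tau> * c + k) + k^2 * m * c)" for g
  have Rnn: "R g \<ge> 0" if "g \<ge> 0" for g
    unfolding R_def using that c assms by (simp add: mult_nonneg_nonneg add_nonneg_pos)
  have J: "J_DAPI N b \<alpha> m \<tau> k g = \<alpha> / (2 * m) * (real N - 1) * (1 / (1 + R g))" for g
    by (simp add: J_DAPI_def R_def c_def mult.assoc mult.left_commute)
  have g0p: "g0 \<ge> 0" using key[OF c assms(4,5,6) order_refl g0d] by simp
  show ?thesis
  proof (intro conjI allI impI)
    show "gamma_opt N b m \<tau> k \<ge> 0" using g0p g0_def by simp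
    fix g :: real assume g: "g \<ge> 0"
    have "R g \<le> R g0" using key[OF c assms(4,5,6) g g0d] by (simp add: R_def)
    hence "1 / (1 + R g0) \<le> 1 / (1 + R g)" using Rnn[OF g] by (simp add: frac_le)
    hence "\<alpha> / (2 * m) * (real N - 1) * (1 / (1 + R g0)) \<le> \<alpha> / (2 * m) * (real N - 1) * (1 / (1 + R g))"
      using A by (simp only: mult_le_cancel_left_pos)
    thus "J_DAPI N b \<alpha> m \<tau> k (gamma_opt N b m \<tau> k) \<le> J_DAPI N b \<alpha> m \<tau> k g"
      by (simp add: J g0_def[symmetric])
  qed
qed

end
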